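(* Let $L, S, M$ be positive integers and $n = 3L$. Let $\mathbf{D}\in\mathbb{R}^{n\times S}$ and $\mathbf{U}\in\mathbb{R}^{M\times S}$ be real matrices, and let $\mathbf{W}\in\mathbb{R}^{n\times n}$ be a diagonal matrix with nonnegative diagonal entries. Define $$\mathbf{A}=\frac{1}{S}\mathbf{D}\mathbf{D}^\mathsf{T},\qquad \mathbf{P}=\begin{bmatrix}\mathbf{D}\\ \mathbf{U}\end{bmatrix}\in\mathbb{R}^{(n+M)\times S},\qquad \widetilde{\mathbf{A}}=\frac{1}{S}\mathbf{P}\mathbf{P}^\mathsf{T},\qquad \widetilde{\mathbf{W}}=\begin{bmatrix}\mathbf{W}&\mathbf{0}\\ \mathbf{0}&\mathbf{0}_{M\times M}\end{bmatrix},\qquad \mathbf{C}=\frac{1}{S}\mathbf{U}\mathbf{D}^\mathsf{T}.$$ Then: (i) for every $\lambda$, $\det(\widetilde{\mathbf{A}}\widetilde{\mathbf{W}}-\lambda\mathbf{I}_{n+M})=(-\lambda)^M\det(\mathbf{A}\mathbf{W}-\lambda\mathbf{I}_n)$; hence the eigenvalues of $\widetilde{\mathbf{A}}\widetilde{\mathbf{W}}$ (with algebraic multiplicity) are exactly the eigenvalues of $\mathbf{A}\mathbf{W}$ together with $M$ additional zero eigenvalues; (ii) if $\mathbf{z}\neq\mathbf{0}$ satisfies $\mathbf{A}\mathbf{W}\mathbf{z}=\lambda\mathbf{z}$ with $\lambda\neq 0$, then the vector $\begin{bmatrix}\mathbf{z}\\ \mathbf{v}\end{bmatrix}$ with $\mathbf{v}=\lambda^{-1}\mathbf{C}\mathbf{W}\mathbf{z}$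 satisfies $\widetilde{\mathbf{A}}\widetilde{\mathbf{W}}\begin{bmatrix}\mathbf{z}\\ \mathbf{v}\end{bmatrix}=\lambda\begin{bmatrix}\mathbf{z}\\ \mathbf{v}\end{bmatrix}$; conversely, if $\begin{bmatrix}\mathbf{q}\\ \mathbf{v}\end{bmatrix}\neq\mathbf{0}$ (with $\mathbf{q}\in\mathbb{R}^n$, $\mathbf{v}\in\mathbb{R}^M$) is an eigenvector of $\widetilde{\mathbf{A}}\widetilde{\mathbf{W}}$ with eigenvalue $\lambda\neq0$, then $\mathbf{q}\neq\mathbf{0}$, $\mathbf{A}\mathbf{W}\mathbf{q}=\lambda\mathbf{q}$, and $\mathbf{v}=\lambda^{-1}\mathbf{C}\mathbf{W}\mathbf{q}$.
   Context: This compares the weighted principal component analysis of a data matrix $\mathbf{D}$ of (centered) discretized shape-modification vectors (eigenproblem of $\mathbf{A}\mathbf{W}$, "KLE") with that of the augmented matrix $\mathbf{P}$ obtained by appending the (centered) design-variable samples $\mathbf{U}$ with zero weight (eigenproblem of $\widetilde{\mathbf{A}}\widetilde{\mathbf{W}}$, "parametric model embedding"). The element-measure matrix is taken to be the identity. *)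

theory Defs
  imports "Jordan_Normal_Form.Char_Poly"
begin

end

theory Submission
  imports Defs
begin

lemma smult_append_vec_h: "c \<cdot>\<^sub>v (a @\<^sub>v b) = (c \<cdot>\<^sub>v a) @\<^sub>v (c \<cdot>\<^sub>v (b :: 'a :: ring vec))"
  by (rule eq_vecI) auto

lemma zero_append_vec_h: "0\<^sub>v n @\<^sub>v 0\<^sub>v m = (0\<^sub>v (n + m) :: 'a :: zero vec)"
  by (rule eq_vecI) auto

theorem mainTheorem1:
  fixes L S M n :: nat and D U W :: "real mat"
  assumes "L > 0" and "S > 0" and "M > 0" and "n = 3 * L"
    and "D \<in> carrier_mat n S" and "U \<in> carrier_mat M S"
    and "W \<in> carrier_mat n n" and "diagonal_mat W"
    and "\<forall>i<n. W $$ (i, i) \<ge> 0"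
  defines "A \<equiv> (1 / real S) \<cdot>\<^sub>m (D * D\<^sup>T)"
    and "At \<equiv> (1 / real S) \<cdot>\<^sub>m ((D @\<^sub>r U) * (D @\<^sub>r U)\<^sup>T)"
    and "Wt \<equiv> four_block_mat W (0\<^sub>m n M) (0\<^sub>m M n) (0\<^sub>m M M)"
    and "C \<equiv> (1 / real S) \<cdot>\<^sub>m (U * D\<^sup>T)"
  shows
    "(\<forall>lam. det (At * Wt - lam \<cdot>\<^sub>m 1\<^sub>m (n + M)) = (- lam) ^ M * det (A * W - lam \<cdot>\<^sub>m 1\<^sub>m n))
     \<and> char_poly (At * Wt) = monom 1 M * char_poly (A * W)
     \<and> (\<forall>z lam. z \<in> carrier_vec n \<and> z \<noteq> 0\<^sub>v n \<and> lam \<noteq> 0 \<and> (A * W) *\<^sub>v z = lam \<cdot>\<^sub>v z \<longrightarrow>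
          (At * Wt) *\<^sub>v (z @\<^sub>v ((1 / lam) \<cdot>\<^sub>v ((C * W) *\<^sub>v z)))
            = lam \<cdot>\<^sub>v (z @\<^sub>v ((1 / lam) \<cdot>\<^sub>v ((C * W) *\<^sub>v z))))
     \<and> (\<forall>q v lam. q \<in> carrier_vec n \<and> v \<in> carrier_vec M \<and> q @\<^sub>v v \<noteq> 0\<^sub>v (n + M) \<and> lam \<noteq> 0
          \<and> (At * Wt) *\<^sub>v (q @\<^sub>v v) = lam \<cdot>\<^sub>v (q @\<^sub>v v) \<longrightarrow>
          q \<noteq> 0\<^sub>v n \<and> (A * W) *\<^sub>v q = lam \<cdot>\<^sub>v q \<and> v = (1 / lam) \<cdot>\<^sub>v ((C * W) *\<^sub>v q))"
proof -
  note DUW = assms(5-7)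
  let ?s = "1 / real S"
  have P: "D @\<^sub>r U = four_block_mat D (0\<^sub>m n 0) U (0\<^sub>m M 0)"
    unfolding append_rows_def using DUW by auto
  have PT: "(D @\<^sub>r U)\<^sup>T = four_block_mat D\<^sup>T U\<^sup>T (0\<^sub>m 0 n) (0\<^sub>m 0 M)"
    unfolding P using DUW by (subst transpose_four_block_mat[of _ n S _ 0 _ M], auto)
  have PP: "(D @\<^sub>r U) * (D @\<^sub>r U)\<^sup>T = four_block_mat (D * D\<^sup>T) (D * U\<^sup>T) (U * D\<^sup>T) (U * U\<^sup>T)"
    unfolding PT unfolding P using DUW
    by (subst mult_four_block_mat[of _ n S _ 0 _ M _ _ n _ M], auto)
  have AtB: "At = four_block_mat A (?s \<cdot>\<^sub>m (D * U\<^sup>T)) C (?s \<cdot>\<^sub>m (U * U\<^sup>T))"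
    unfolding At_def PP A_def C_def using DUW
    by (subst smult_four_block_mat[of _ n n _ M _ M], auto)
  have Acar: "A \<in> carrier_mat n n" and Ccar: "C \<in> carrier_mat M n"
    unfolding A_def C_def using DUW by auto
  have B: "At * Wt = four_block_mat (A * W) (0\<^sub>m n M) (C * W) (0\<^sub>m M M)"
    unfolding AtB Wt_def using DUW Acar Ccar
    by (subst mult_four_block_mat[of _ n n _ M _ M _ _ n _ M], auto)
  have AW: "A * W \<in> carrier_mat n n" and CW: "C * W \<in> carrier_mat M n"
    using Acar Ccar DUW by auto
  have dims: "dim_row A = n" "dim_col A = n" "dim_row W = n" "dim_col W = n" "dim_row C = M" "dim_col C = n"
    using Acar Ccar DUW by auto
  have part1: "det (At * Wt - lam \<cdot>\<^sub>m 1\<^sub>m (n + M)) = (- lam) ^ M * det (A * W - lam \<cdot>\<^sub>m 1\<^sub>m n)" for lam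
  proof -
    have "At * Wt - lam \<cdot>\<^sub>m 1\<^sub>m (n + M) = four_block_mat (A * W - lam \<cdot>\<^sub>m 1\<^sub>m n) (0\<^sub>m n M) (C * W) ((-lam) \<cdot>\<^sub>m 1\<^sub>m M)"
      unfolding B using AW CW by (intro eq_matI, auto simp: dims)
    also have "det \<dots> = det (A * W - lam \<cdot>\<^sub>m 1\<^sub>m n) * det ((-lam) \<cdot>\<^sub>m 1\<^sub>m M)"
      using AW CW by (intro det_four_block_mat_upper_right_zero[of _ n _ M], auto)
    finally show ?thesis by simp
  qed
  have part2: "char_poly (At * Wt) = monom 1 M * char_poly (A * W)"
  proof -
    have "char_poly_matrix (At * Wt) = four_block_mat (char_poly_matrix (A * W)) (0\<^sub>m n M)
       (map_mat (\<lambda>a. [:- a:]) (C * W)) ([:0,1:] \<cdot>\<^sub>m 1\<^sub>m M)"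
      unfolding B char_poly_matrix_def using AW CW by (intro eq_matI, auto simp: dims one_poly_def)
    hence "char_poly (At * Wt) = det (char_poly_matrix (A * W)) * det ([:0,1:] \<cdot>\<^sub>m 1\<^sub>m M)"
      unfolding char_poly_def using AW CW
      by (simp add: det_four_block_mat_upper_right_zero[of _ n _ M])
    thus ?thesis by (simp add: char_poly_def monom_altdef)
  qed
  have mv: "(At * Wt) *\<^sub>v (x @\<^sub>v y) = ((A * W) *\<^sub>v x) @\<^sub>v ((C * W) *\<^sub>v x)"
    if "x \<in> carrier_vec n" "y \<in> carrier_vec M" for x y
  proof -
    have z1: "0\<^sub>m n M *\<^sub>v y = 0\<^sub>v n" and z2: "0\<^sub>m M M *\<^sub>v y = 0\<^sub>v M"
      using that by (auto intro!: eq_vecI simp: scalar_prod_def)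
    show ?thesis
      unfolding B using AW CW that
      by (subst four_block_mat_mult_vec[of _ n n _ M _ M], auto simp: z1 z2)
  qed
  show ?thesis
  proof (intro conjI allI impI part1 part2)
    fix z lam
    assume h: "z \<in> carrier_vec n \<and> z \<noteq> 0\<^sub>v n \<and> lam \<noteq> 0 \<and> (A * W) *\<^sub>v z = lam \<cdot>\<^sub>v z"
    have y: "(1 / lam) \<cdot>\<^sub>v ((C * W) *\<^sub>v z) \<in> carrier_vec M" using CW unfolding carrier_mat_def carrier_vec_def by auto
    have "lam \<cdot>\<^sub>v ((1 / lam) \<cdot>\<^sub>v ((C * W) *\<^sub>v z)) = (C * W) *\<^sub>v z"
      using h by (simp add: smult_smult_assoc)
    then show "(At * Wt) *\<^sub>v (z @\<^sub>v ((1 / lam) \<cdot>\<^sub>v ((C * W) *\<^sub>v z)))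
            = lam \<cdot>\<^sub>v (z @\<^sub>v ((1 / lam) \<cdot>\<^sub>v ((C * W) *\<^sub>v z)))"
      using mv[OF _ y, of z] h y CW
      by (simp add: smult_append_vec_h)
  next
    fix q v lam
    assume h: "q \<in> carrier_vec n \<and> v \<in> carrier_vec M \<and> q @\<^sub>v v \<noteq> 0\<^sub>v (n + M) \<and> lam \<noteq> 0
          \<and> (At * Wt) *\<^sub>v (q @\<^sub>v v) = lam \<cdot>\<^sub>v (q @\<^sub>v v)"
    hence e: "((A * W) *\<^sub>v q) @\<^sub>v ((C * W) *\<^sub>v q) = (lam \<cdot>\<^sub>v q) @\<^sub>v (lam \<cdot>\<^sub>v v)"
      using mv[of q v] by (simp add: smult_append_vec_h)
    have e1: "(A * W) *\<^sub>v q = lam \<cdot>\<^sub>v q" and e2: "(C * W) *\<^sub>v q = lam \<cdot>\<^sub>v v"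
      using append_vec_eq[of "(A * W) *\<^sub>v q" n "lam \<cdot>\<^sub>v q"] e AW CW h by auto
    show "(A * W) *\<^sub>v q = lam \<cdot>\<^sub>v q" by (rule e1)
    have ve: "v = (1 / lam) \<cdot>\<^sub>v ((C * W) *\<^sub>v q)"
      unfolding e2 using h by (simp add: smult_smult_assoc)
    thus "v = (1 / lam) \<cdot>\<^sub>v ((C * W) *\<^sub>v q)" .
    show "q \<noteq> 0\<^sub>v n"
    proof
      assume "q = 0\<^sub>v n"
      hence "v = 0\<^sub>v M" using ve CW by (auto intro!: eq_vecI simp: scalar_prod_def)
      with \<open>q = 0\<^sub>v n\<close> h show False by (simp add: zero_append_vec_h)
    qed
  qed
qed

end
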